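(* Let $N=pq$ with $p,q$ distinct primes. Let $d\in\mathbb{N}$ and $b_1,\dots,b_d\in\mathbb{Z}$. For each $i$ let $f_i=l_iX+c_i\in\mathbb{Z}[X]$ be a polynomial of degree $1$ with $f_i(b_i)=N$. If $\gcd(c_i,N)=1$ for every $i$ and $\gcd(b_j-b_k,N)=1$ for all $j,k\in\{1,\dots,d\}$ with $j\neq k$, then \[\nu\Big(\prod_{i=1}^d f_i\Big)=dp+dq-2d^2.\]
   Context: $Z_N=\{0,1,\dots,N-1\}$. For $g\in\mathbb{Z}[X]$, an element $x\in Z_N$ is called suitable for $g$ if $1<\gcd(g(x),N)<N$, and $\nu(g)$ denotes the number of $x\in Z_N$ suitable for $g$. *)

theory Defs
  imports "HOL-Computational_Algebra.Computational_Algebra"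
begin

definition suitable :: "nat \<Rightarrow> int poly \<Rightarrow> nat \<Rightarrow> bool" where
  "suitable N g x \<longleftrightarrow> x < N \<and> 1 < gcd (poly g (int x)) (int N) \<and> gcd (poly g (int x)) (int N) < int N"

definition nu :: "nat \<Rightarrow> int poly \<Rightarrow> nat" where
  "nu N g = card {x. x < N \<and> suitable N g x}"

end

theory Submission
  imports Defs "HOL-Number_Theory.Cong"
begin

lemma prime_cop_iff: "prime (p::int) \<Longrightarrow> coprime v p \<longleftrightarrow> \<not> p dvd v"
  by (meson coprime_absorb_right coprime_commute not_prime_unit prime_imp_coprime_int)

lemma lin_poly: "degree (f::int poly) = 1 \<Longrightarrow> poly f x = coeff f 0 + coeff f 1 * x"
  by (simp add: poly_altdef)

lemma key_lin:
  fixes p N :: nat and f :: "int poly"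
  assumes "prime p" "p dvd N" "poly f b = int N" "degree f = 1" "gcd (coeff f 0) (int N) = 1"
  shows "int p dvd poly f x \<longleftrightarrow> int p dvd (x - b)"
proof -
  let ?c = "coeff f 0" and ?l = "coeff f 1"
  have e1: "poly f x = ?c + ?l * x" "poly f b = ?c + ?l * b" using lin_poly assms(4) by auto
  have pN: "int p dvd int N" using assms(2) by simp
  have pp: "prime (int p)" using assms(1) by simp
  have nl: "\<not> int p dvd ?l"
  proof
    assume "int p dvd ?l"
    then have "int p dvd ?l * b" by simp
    then have "int p dvd ?c" using pN e1(2) assms(3)
      by (metis add_diff_cancel_right' dvd_diff)
    then have "int p dvd gcd ?c (int N)" using pN by simp
    then show False using assms(5) pp by (simp add: prime_int_iff)
  qed
  have "poly f x = ?l * (x - b) + int N" using e1 assms(3) by (simp add: algebra_simps)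
  then have "int p dvd poly f x \<longleftrightarrow> int p dvd ?l * (x - b)" using pN
    by (metis dvd_add_left_iff)
  also have "\<dots> \<longleftrightarrow> int p dvd (x - b)" using nl pp by (simp add: prime_dvd_mult_iff)
  finally show ?thesis .
qed

lemma dvd_mod_iff:
  fixes p x :: nat and c :: int
  assumes "p > 0"
  shows "int p dvd (int x - c) \<longleftrightarrow> x mod p = nat (c mod int p)"
proof -
  have "int p dvd (int x - c) \<longleftrightarrow> int x mod int p = c mod int p"
    by (simp add: mod_eq_dvd_iff)
  also have "\<dots> \<longleftrightarrow> int (x mod p) = c mod int p" by (simp add: zmod_int)
  also have "\<dots> \<longleftrightarrow> x mod p = nat (c mod int p)" using assms by auto
  finally show ?thesis .
qed

lemma prod_char:
  fixes p N d :: nat and b :: "nat \<Rightarrow> int" and f :: "nat \<Rightarrow> int poly"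
  assumes "prime p" "p dvd N"
    and "\<And>i. i \<in> {1..d} \<Longrightarrow> degree (f i) = 1"
    and "\<And>i. i \<in> {1..d} \<Longrightarrow> poly (f i) (b i) = int N"
    and "\<And>i. i \<in> {1..d} \<Longrightarrow> gcd (coeff (f i) 0) (int N) = 1"
  shows "int p dvd poly (\<Prod>i\<in>{1..d}. f i) (int x) \<longleftrightarrow>
     x mod p \<in> (\<lambda>i. nat (b i mod int p)) ` {1..d}"
proof -
  have pp: "prime (int p)" using assms(1) by simp
  have "int p dvd poly (\<Prod>i\<in>{1..d}. f i) (int x) \<longleftrightarrow>
        (\<exists>i\<in>{1..d}. int p dvd poly (f i) (int x))"
    by (simp only: poly_prod prime_dvd_prod_iff[OF finite_atLeastAtMost pp])
  also have "\<dots> \<longleftrightarrow> (\<exists>i\<in>{1..d}. int p dvd (int x - b i))"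
  proof -
    have "(int p dvd poly (f i) (int x)) = (int p dvd int x - b i)" if "i\<in>{1..d}" for i
      using key_lin[OF assms(1,2) assms(4)[OF that] assms(3)[OF that] assms(5)[OF that]] .
    then show ?thesis by (rule bex_cong[OF refl])
  qed
  also have "\<dots> \<longleftrightarrow> (\<exists>i\<in>{1..d}. x mod p = nat (b i mod int p))"
    using dvd_mod_iff[of p] prime_gt_0_nat[OF assms(1)] by auto
  finally show ?thesis by auto
qed

lemma card_S:
  fixes p N d :: nat and b :: "nat \<Rightarrow> int"
  assumes "prime p" "p dvd N"
    and "\<And>j k. j \<in> {1..d} \<Longrightarrow> k \<in> {1..d} \<Longrightarrow> j \<noteq> k \<Longrightarrow> gcd (b j - b k) (int N) = 1"
  shows "card ((\<lambda>i. nat (b i mod int p)) ` {1..d}) = d"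
    "(\<lambda>i. nat (b i mod int p)) ` {1..d} \<subseteq> {..<p}"
proof -
  have p0: "p > 0" using prime_gt_0_nat assms(1) by simp
  have pp: "prime (int p)" using assms(1) by simp
  have "inj_on (\<lambda>i. nat (b i mod int p)) {1..d}"
  proof (rule inj_onI)
    fix j k assume jk: "j \<in> {1..d}" "k \<in> {1..d}" "nat (b j mod int p) = nat (b k mod int p)"
    show "j = k"
    proof (rule ccontr)
      assume "j \<noteq> k"
      have "b j mod int p = b k mod int p" using jk(3) p0
        by (metis Euclidean_Rings.pos_mod_sign nat_eq_iff2 of_nat_0_less_iff)
      then have "int p dvd (b j - b k)" by (simp add: mod_eq_dvd_iff)
      moreover have "int p dvd int N" using assms(2) by simp
      ultimately have "int p dvd gcd (b j - b k) (int N)" by simp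
      then show False using assms(3)[OF jk(1,2) \<open>j \<noteq> k\<close>] pp by (simp add: prime_int_iff)
    qed
  qed
  then show "card ((\<lambda>i. nat (b i mod int p)) ` {1..d}) = d" by (simp add: card_image)
  show "(\<lambda>i. nat (b i mod int p)) ` {1..d} \<subseteq> {..<p}" using p0
    by (auto simp: nat_less_iff)
qed

lemma suitable_char:
  fixes p q N :: nat and v :: int
  assumes "prime p" "prime q" "p \<noteq> q" "N = p * q"
  shows "(1 < gcd v (int N) \<and> gcd v (int N) < int N) \<longleftrightarrow> (int p dvd v) \<noteq> (int q dvd v)"
proof -
  have pp: "prime (int p)" and qq: "prime (int q)" using assms(1,2) by auto
  have cop: "coprime (int p) (int q)" using assms(1-3) by (simp add: primes_coprime)
  have N0: "int N > 0" using assms(1,2,4) prime_gt_0_nat by simp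
  have g0: "gcd v (int N) \<noteq> 0" using N0 by simp
  have NN: "int N = int p * int q" using assms(4) by simp
  have "gcd v (int N) = 1 \<longleftrightarrow> coprime v (int N)" by (simp add: coprime_iff_gcd_eq_1)
  also have "\<dots> \<longleftrightarrow> coprime v (int p) \<and> coprime v (int q)" unfolding NN by simp
  also have "\<dots> \<longleftrightarrow> \<not> int p dvd v \<and> \<not> int q dvd v"
    using prime_cop_iff[OF pp] prime_cop_iff[OF qq] by simp
  finally have A: "1 < gcd v (int N) \<longleftrightarrow> int p dvd v \<or> int q dvd v"
    using g0 gcd_ge_0_int[of v "int N"] by linarith
  have "gcd v (int N) \<le> int N" using N0 by (simp add: zdvd_imp_le)
  moreover have "gcd v (int N) = int N \<longleftrightarrow> int N dvd v"
    using N0 by (metis dvd_refl gcd_unique_int less_le_not_le)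
  moreover have "int N dvd v \<longleftrightarrow> int p dvd v \<and> int q dvd v"
    unfolding NN using cop divides_mult[of "int p" v "int q"]
    by (meson dvd_mult_left dvd_mult_right dvd_trans)
  ultimately have B: "gcd v (int N) < int N \<longleftrightarrow> \<not> (int p dvd v \<and> int q dvd v)" by linarith
  show ?thesis using A B by blast
qed


lemma crt_img:
  fixes p q N :: nat
  assumes "prime p" "prime q" "p \<noteq> q" "N = p * q"
  shows "inj_on (\<lambda>x. (x mod p, x mod q)) {..<N}"
    "(\<lambda>x. (x mod p, x mod q)) ` {..<N} = {..<p} \<times> {..<q}"
proof -
  have p0: "p > 0" and q0: "q > 0" using assms(1,2) prime_gt_0_nat by auto
  have cop: "coprime p q" using assms(1-3) by (simp add: primes_coprime)
  show inj: "inj_on (\<lambda>x. (x mod p, x mod q)) {..<N}"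
  proof (rule inj_onI)
    fix x y assume xy: "x \<in> {..<N}" "y \<in> {..<N}" "(x mod p, x mod q) = (y mod p, y mod q)"
    then have "[x = y] (mod p)" "[x = y] (mod q)" by (auto simp: cong_def)
    then have "[x = y] (mod p * q)" using cop by (simp add: coprime_cong_mult_nat)
    then show "x = y" using xy(1,2) assms(4) cong_less_imp_eq_nat by auto
  qed
  have sub: "(\<lambda>x. (x mod p, x mod q)) ` {..<N} \<subseteq> {..<p} \<times> {..<q}" using p0 q0 by auto
  have "card ((\<lambda>x. (x mod p, x mod q)) ` {..<N}) = card ({..<p} \<times> {..<q})"
    using card_image[OF inj] assms(4) by (simp add: card_cartesian_product)
  then show "(\<lambda>x. (x mod p, x mod q)) ` {..<N} = {..<p} \<times> {..<q}"
    using sub by (simp add: card_subset_eq)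
qed

theorem theorem2p9:
  fixes p q N d :: nat and b :: "nat \<Rightarrow> int" and f :: "nat \<Rightarrow> int poly"
  assumes "prime p" and "prime q" and "p \<noteq> q" and "N = p * q"
    and "\<And>i. i \<in> {1..d} \<Longrightarrow> degree (f i) = 1"
    and "\<And>i. i \<in> {1..d} \<Longrightarrow> poly (f i) (b i) = int N"
    and "\<And>i. i \<in> {1..d} \<Longrightarrow> gcd (coeff (f i) 0) (int N) = 1"
    and "\<And>j k. j \<in> {1..d} \<Longrightarrow> k \<in> {1..d} \<Longrightarrow> j \<noteq> k \<Longrightarrow> gcd (b j - b k) (int N) = 1"
  shows "int (nu N (\<Prod>i\<in>{1..d}. f i)) = int d * int p + int d * int q - 2 * (int d)^2"
proof -
  define F where "F = (\<Prod>i\<in>{1..d}. f i)"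
  define Sp where "Sp = (\<lambda>i. nat (b i mod int p)) ` {1..d}"
  define Sq where "Sq = (\<lambda>i. nat (b i mod int q)) ` {1..d}"
  define g where "g = (\<lambda>x::nat. (x mod p, x mod q))"
  define Sx where "Sx = {x. x < N \<and> suitable N F x}"
  have pN: "p dvd N" and qN: "q dvd N" using assms(4) by auto
  have cSp: "card Sp = d" "Sp \<subseteq> {..<p}" unfolding Sp_def using card_S[OF assms(1) pN assms(8)] by auto
  have cSq: "card Sq = d" "Sq \<subseteq> {..<q}" unfolding Sq_def using card_S[OF assms(2) qN assms(8)] by auto
  have Pc: "int p dvd poly F (int x) \<longleftrightarrow> x mod p \<in> Sp" for x
    unfolding F_def Sp_def using prod_char[where p=p and N=N and d=d and b=b and f=f, OF assms(1) pN assms(5-7)] by blast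
  have Qc: "int q dvd poly F (int x) \<longleftrightarrow> x mod q \<in> Sq" for x
    unfolding F_def Sq_def using prod_char[where p=q and N=N and d=d and b=b and f=f, OF assms(2) qN assms(5-7)] by blast
  have Sx_eq: "Sx = {x\<in>{..<N}. (fst (g x) \<in> Sp) \<noteq> (snd (g x) \<in> Sq)}"
    unfolding Sx_def suitable_def g_def
    using suitable_char[OF assms(1-4)] Pc Qc by auto
  have inj: "inj_on g {..<N}" and img: "g ` {..<N} = {..<p} \<times> {..<q}"
    unfolding g_def using crt_img[OF assms(1-4)] by auto
  have "g ` Sx = {y \<in> g ` {..<N}. (fst y \<in> Sp) \<noteq> (snd y \<in> Sq)}"
    unfolding Sx_eq by auto
  also have "\<dots> = Sp \<times> ({..<q} - Sq) \<union> ({..<p} - Sp) \<times> Sq"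
    unfolding img using cSp(2) cSq(2) by auto
  finally have gS: "g ` Sx = Sp \<times> ({..<q} - Sq) \<union> ({..<p} - Sp) \<times> Sq" .
  have "card Sx = card (g ` Sx)"
    by (rule card_image[symmetric], rule inj_on_subset[OF inj]) (auto simp: Sx_eq)
  also have "\<dots> = card (Sp \<times> ({..<q} - Sq)) + card (({..<p} - Sp) \<times> Sq)"
    proof -
    have fp: "finite Sp" "finite Sq" using cSp(2) cSq(2) finite_subset by auto
    show ?thesis unfolding gS by (rule card_Un_disjoint) (use fp in auto)
  qed
  also have "\<dots> = d * (q - d) + (p - d) * d"
    using cSp cSq by (simp add: card_cartesian_product card_Diff_subset finite_subset)
  finally have cx: "card Sx = d * (q - d) + (p - d) * d" .
  have dp: "d \<le> p" using cSp card_mono[of "{..<p}" Sp] by simp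
  have dq: "d \<le> q" using cSq card_mono[of "{..<q}" Sq] by simp
  have "nu N (\<Prod>i\<in>{1..d}. f i) = card Sx" unfolding nu_def Sx_def F_def by simp
  moreover have "int (card Sx) = int d * (int q - int d) + (int p - int d) * int d"
    using cx dp dq by (simp add: of_nat_diff)
  ultimately show ?thesis by (simp add: power2_eq_square algebra_simps)
qed

end
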